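(* Let $X$ be an abelian metric group and let $f:X\to\mathbb{R}$ be a subadditive function. The following conditions are equivalent: (a) $f$ is locally bounded at some point; (b) $f$ is a WNT-function; (c) $f$ is bounded above on some shift-compact set; (d) $f$ is bounded on some shift-compact set.
   Context: An abelian metric group is an abelian topological group whose topology is given by an invariant metric. $f$ is subadditive if $f(x+y)\le f(x)+f(y)$ for all $x,y\in X$. A set $A\subset X$ is shift-compact if for every sequence $(x_n)$ tending to $0$ in $X$ there exists $x\in X$ such that $\{n\in\mathbb{N}: x+x_n\in A\}$ is infinite. Locally bounded at a point means $|f|$ is bounded on some neighbourhood of that point. For $k\in\mathbb{N}$ let $H^k:=f^{-1}((-k,k))$. $f$ is a WNT-function if for every convergent sequence $(u_n)_{n\in\mathbb{N}}$ in $X$ there exist $k\in\mathbb{N}$, an infinite set $\mathbb{M}\subset\mathbb{N}$ and $t\in X$ such that $\{t+u_m: m\in\mathbb{M}\}\subset H^k$. *)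

theory Defs
  imports "HOL-Analysis.Analysis"
begin

text \<open>An abelian metric group: an abelian group carrying an invariant metric.
  (Invariance of the metric already makes addition and negation continuous.)\<close>
definition invariant_metric_group :: "('a::{metric_space, ab_group_add}) itself \<Rightarrow> bool" where
  "invariant_metric_group _ \<longleftrightarrow> (\<forall>x y z::'a. dist (x + z) (y + z) = dist x y)"

definition subadditive :: "('a::ab_group_add \<Rightarrow> real) \<Rightarrow> bool" where
  "subadditive f \<longleftrightarrow> (\<forall>x y. f (x + y) \<le> f x + f y)"

definition shift_compact :: "('a::{metric_space, ab_group_add}) set \<Rightarrow> bool" where
  "shift_compact A \<longleftrightarrow>
     (\<forall>xs::nat \<Rightarrow> 'a. xs \<longlonglongrightarrow> 0 \<longrightarrow> (\<exists>x. infinite {n. x + xs n \<in> A}))"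

definition locally_bounded_at :: "('a::topological_space \<Rightarrow> real) \<Rightarrow> 'a \<Rightarrow> bool" where
  "locally_bounded_at f x \<longleftrightarrow> (\<exists>U B. open U \<and> x \<in> U \<and> (\<forall>y\<in>U. \<bar>f y\<bar> \<le> B))"

definition H_level :: "('a \<Rightarrow> real) \<Rightarrow> nat \<Rightarrow> 'a set" where
  "H_level f k = f -` {- real k <..< real k}"

definition WNT_function :: "('a::{metric_space, ab_group_add} \<Rightarrow> real) \<Rightarrow> bool" where
  "WNT_function f \<longleftrightarrow>
     (\<forall>u::nat \<Rightarrow> 'a. convergent u \<longrightarrow>
        (\<exists>k M t. infinite M \<and> (\<lambda>m. t + u m) ` M \<subseteq> H_level f k))"

end

theory Submission
  imports Defs
begin

context
  fixes f :: "'a::{metric_space, ab_group_add} \<Rightarrow> real"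
  assumes inv: "invariant_metric_group TYPE('a)"
    and sub: "subadditive f"
begin

definition PB :: bool where
  "PB \<longleftrightarrow> (\<exists>d>0. \<exists>B. \<forall>y. dist y 0 < d \<longrightarrow> f y \<le> B)"

lemma dinv: "dist (x + z) (y + z) = dist x (y::'a)"
  using inv unfolding invariant_metric_group_def by blast

lemma sa: "f (x + y) \<le> f x + f y"
  using sub unfolding subadditive_def by blast

lemma dneg: "dist (- y) 0 = dist y (0::'a)"
proof -
  have "dist (- y + y) (0 + y) = dist (- y) 0" by (rule dinv)
  then show ?thesis by (simp add: dist_commute)
qed

lemma low: "f y \<ge> f 0 - f (- y)"
  using sa[of y "- y"] by simp

lemma shiftle: "f y \<le> f (t + y) + f (- t)"
  using sa[of "t + y" "- t"] by (simp add: add.commute)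

lemma L1: assumes PB shows "\<exists>d>0. \<exists>B. \<forall>y. dist y 0 < d \<longrightarrow> \<bar>f y\<bar> \<le> B"
proof -
  obtain d B where d: "d > 0" and B: "\<And>y. dist y 0 < d \<Longrightarrow> f y \<le> B"
    using assms unfolding PB_def by blast
  have "\<bar>f y\<bar> \<le> max B (B - f 0)" if "dist y 0 < d" for y
  proof -
    have "f (- y) \<le> B" using B[of "- y"] that dneg by simp
    then show ?thesis using B[OF that] low[of y] by auto
  qed
  then show ?thesis using d by blast
qed

lemma L2: assumes "\<not> PB" shows "\<exists>x. x \<longlonglongrightarrow> 0 \<and> (\<forall>n. f (x n) \<ge> real n)"
proof -
  have "\<forall>n. \<exists>y. dist y 0 < 1 / (real n + 1) \<and> f y \<ge> real n"
  proof
    fix n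
    have "\<not> (\<forall>y. dist y 0 < 1 / (real n + 1) \<longrightarrow> f y \<le> real n)"
      proof
      assume "\<forall>y. dist y 0 < 1 / (real n + 1) \<longrightarrow> f y \<le> real n"
      moreover have "1 / (real n + 1) > 0" by simp
      ultimately show False using assms unfolding PB_def by blast
    qed
    then show "\<exists>y. dist y 0 < 1 / (real n + 1) \<and> f y \<ge> real n" by force
  qed
  then obtain x where x: "\<And>n. dist (x n) 0 < 1 / (real n + 1) \<and> f (x n) \<ge> real n"
    by metis
  have "x \<longlonglongrightarrow> 0"
  proof (rule metric_LIMSEQ_I)
    fix r :: real assume r: "r > 0"
    obtain N :: nat where N: "1 / r < real N" using reals_Archimedean2 by blast
    have "dist (x n) 0 < r" if "n \<ge> N" for n
    proof -
      have "1 / (real n + 1) < r"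
        proof -
        have "1 / r < real n + 1" using N that by (smt (verit) of_nat_mono)
        then show ?thesis using r by (simp add: divide_less_eq mult.commute)
      qed
      then show ?thesis using x[of n] by linarith
    qed
    then show "\<exists>no. \<forall>n\<ge>no. dist (x n) 0 < r" by blast
  qed
  then show ?thesis using x by blast
qed

lemma L3: assumes "locally_bounded_at f x0" shows PB
proof -
  obtain U B where U: "open U" "x0 \<in> U" and B: "\<And>y. y \<in> U \<Longrightarrow> \<bar>f y\<bar> \<le> B"
    using assms unfolding locally_bounded_at_def by blast
  obtain d where d: "d > 0" "ball x0 d \<subseteq> U" using U open_contains_ball by blast
  have "f y \<le> B + f (- x0)" if "dist y 0 < d" for y
  proof -
    have "dist (y + x0) (0 + x0) < d" using that dinv[of y x0 0] by simp
    then have "y + x0 \<in> U" using d by (auto simp: dist_commute)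
    then have "f (y + x0) \<le> B" using B by force
    moreover have "f y \<le> f (x0 + y) + f (- x0)" by (rule shiftle)
    ultimately show ?thesis by (simp add: add.commute)
  qed
  then show PB unfolding PB_def using d by blast
qed

lemma L4: assumes PB shows "locally_bounded_at f 0"
proof -
  obtain d B where d: "d > 0" and B: "\<And>y. dist y 0 < d \<Longrightarrow> \<bar>f y\<bar> \<le> B"
    using L1[OF assms] by blast
  have "open (ball 0 d)" "0 \<in> ball 0 d" using d by auto
  moreover have "\<forall>y\<in>ball 0 d. \<bar>f y\<bar> \<le> B" using B by (simp add: dist_commute)
  ultimately show ?thesis unfolding locally_bounded_at_def by blast
qed

lemma L5: assumes PB shows "WNT_function f"
  unfolding WNT_function_def
proof (intro allI impI)
  fix u :: "nat \<Rightarrow> 'a" assume "convergent u"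
  then obtain L where L: "u \<longlonglongrightarrow> L" unfolding convergent_def by blast
  obtain d B where d: "d > 0" and B: "\<And>y. dist y 0 < d \<Longrightarrow> \<bar>f y\<bar> \<le> B"
    using L1[OF assms] by blast
  obtain N where N: "\<And>n. n \<ge> N \<Longrightarrow> dist (u n) L < d"
    using metric_LIMSEQ_D[OF L d] by blast
  define k where "k = nat (ceiling B) + 1"
  have kB: "B < real k" unfolding k_def by linarith
  have "(\<lambda>m. - L + u m) ` {N..} \<subseteq> H_level f k"
  proof (rule image_subsetI)
    fix m assume "m \<in> {N..}"
    then have "dist (u m) L < d" using N by simp
    moreover have "dist (- L + u m + L) (0 + L) = dist (- L + u m) 0" by (rule dinv)
    ultimately have "dist (- L + u m) 0 < d" by simp
    then have "\<bar>f (- L + u m)\<bar> \<le> B" by (rule B)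
    then show "- L + u m \<in> H_level f k" unfolding H_level_def using kB by auto
  qed
  moreover have "infinite {N..}" by (rule infinite_Ici)
  ultimately show "\<exists>k M t. infinite M \<and> (\<lambda>m. t + u m) ` M \<subseteq> H_level f k" by blast
qed

lemma L6: assumes "\<not> PB" shows "\<not> WNT_function f"
proof
  assume W: "WNT_function f"
  obtain x where x: "x \<longlonglongrightarrow> 0" "\<And>n. f (x n) \<ge> real n" using L2[OF assms] by blast
  have "convergent x" using x(1) convergent_def by blast
  then obtain k M t where M: "infinite M" and H: "(\<lambda>m. t + x m) ` M \<subseteq> H_level f k"
    using W unfolding WNT_function_def by blast
  obtain m where m: "m \<in> M" "real m > real k + f (- t)"
  proof -
    obtain n :: nat where n: "real n > real k + f (- t)" using reals_Archimedean2 by blast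
    obtain m where "m \<in> M" "n \<le> m" using M infinite_nat_iff_unbounded_le by blast
    then show ?thesis using that n by (meson of_nat_mono less_le_trans)
  qed
  have "f (t + x m) < real k" using H m(1) unfolding H_level_def by auto
  moreover have "f (x m) \<le> f (t + x m) + f (- t)" by (rule shiftle)
  ultimately show False using x(2)[of m] m(2) by linarith
qed

lemma L7: assumes PB shows "\<exists>A. shift_compact A \<and> (\<exists>C. \<forall>x\<in>A. \<bar>f x\<bar> \<le> C)"
proof -
  obtain d B where d: "d > 0" and B: "\<And>y. dist y 0 < d \<Longrightarrow> \<bar>f y\<bar> \<le> B"
    using L1[OF assms] by blast
  define A where "A = ball (0::'a) d"
  have "shift_compact A"
    unfolding shift_compact_def
  proof (intro allI impI)
    fix xs :: "nat \<Rightarrow> 'a" assume xs: "xs \<longlonglongrightarrow> 0"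
    obtain N where N: "\<And>n. n \<ge> N \<Longrightarrow> dist (xs n) 0 < d"
      using metric_LIMSEQ_D[OF xs d] by blast
    have "{N..} \<subseteq> {n. 0 + xs n \<in> A}" using N by (auto simp: A_def dist_commute)
    then have "infinite {n. 0 + xs n \<in> A}"
      using infinite_super infinite_Ici by blast
    then show "\<exists>x. infinite {n. x + xs n \<in> A}" by blast
  qed
  moreover have "\<forall>x\<in>A. \<bar>f x\<bar> \<le> B" using B by (simp add: A_def dist_commute)
  ultimately show ?thesis by blast
qed

lemma L8: assumes "shift_compact A" "\<forall>x\<in>A. f x \<le> C" shows PB
proof (rule ccontr)
  assume "\<not> PB"
  obtain x where x: "x \<longlonglongrightarrow> 0" "\<And>n. f (x n) \<ge> real n" using L2[OF \<open>\<not> PB\<close>] by blast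
  obtain z where M: "infinite {n. z + x n \<in> A}"
    using assms(1) x(1) unfolding shift_compact_def by blast
  obtain m where m: "m \<in> {n. z + x n \<in> A}" "real m > C + f (- z)"
  proof -
    obtain n :: nat where n: "real n > C + f (- z)" using reals_Archimedean2 by blast
    obtain m where "m \<in> {n. z + x n \<in> A}" "n \<le> m" using M infinite_nat_iff_unbounded_le by blast
    then show ?thesis using that n by (meson of_nat_mono less_le_trans)
  qed
  have "f (z + x m) \<le> C" using m(1) assms(2) by auto
  moreover have "f (x m) \<le> f (z + x m) + f (- z)" by (rule shiftle)
  ultimately show False using x(2)[of m] m(2) by linarith
qed

lemma main:
  shows "((\<exists>x. locally_bounded_at f x) \<longleftrightarrow> WNT_function f)
       \<and> (WNT_function f \<longleftrightarrow> (\<exists>A. shift_compact A \<and> (\<exists>C. \<forall>x\<in>A. f x \<le> C)))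
       \<and> ((\<exists>A. shift_compact A \<and> (\<exists>C. \<forall>x\<in>A. f x \<le> C))
            \<longleftrightarrow> (\<exists>A. shift_compact A \<and> (\<exists>C. \<forall>x\<in>A. \<bar>f x\<bar> \<le> C)))"
proof -
  have a: "(\<exists>x. locally_bounded_at f x) \<longleftrightarrow> PB" using L3 L4 by blast
  have b: "WNT_function f \<longleftrightarrow> PB" using L5 L6 by blast
  have c: "(\<exists>A. shift_compact A \<and> (\<exists>C. \<forall>x\<in>A. f x \<le> C)) \<longleftrightarrow> PB" 
  proof
    assume "\<exists>A. shift_compact A \<and> (\<exists>C. \<forall>x\<in>A. f x \<le> C)"
    then obtain A C where "shift_compact A" "\<forall>x\<in>A. f x \<le> C" by blast
    then show PB by (rule L8)
  next
    assume PB
    then obtain A C where "shift_compact A" "\<forall>x\<in>A. \<bar>f x\<bar> \<le> C" using L7 by blast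
    moreover have "\<forall>x\<in>A. f x \<le> C" using \<open>\<forall>x\<in>A. \<bar>f x\<bar> \<le> C\<close> abs_le_D1 by blast
    ultimately show "\<exists>A. shift_compact A \<and> (\<exists>C. \<forall>x\<in>A. f x \<le> C)" by blast
  qed
  have d: "(\<exists>A. shift_compact A \<and> (\<exists>C. \<forall>x\<in>A. \<bar>f x\<bar> \<le> C)) \<longleftrightarrow> PB"
  proof
    assume "\<exists>A. shift_compact A \<and> (\<exists>C. \<forall>x\<in>A. \<bar>f x\<bar> \<le> C)"
    then obtain A C where "shift_compact A" "\<forall>x\<in>A. \<bar>f x\<bar> \<le> C" by blast
    moreover have "\<forall>x\<in>A. f x \<le> C" using \<open>\<forall>x\<in>A. \<bar>f x\<bar> \<le> C\<close> abs_le_D1 by blast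
    ultimately show PB using L8 by blast
  qed (rule L7)
  show ?thesis using a b c d by blast
qed

end

theorem corollary3p8:
  fixes f :: "'a::{metric_space, ab_group_add} \<Rightarrow> real"
  assumes "invariant_metric_group TYPE('a)"
    and "subadditive f"
  shows "((\<exists>x. locally_bounded_at f x) \<longleftrightarrow> WNT_function f)
       \<and> (WNT_function f \<longleftrightarrow> (\<exists>A. shift_compact A \<and> (\<exists>C. \<forall>x\<in>A. f x \<le> C)))
       \<and> ((\<exists>A. shift_compact A \<and> (\<exists>C. \<forall>x\<in>A. f x \<le> C))
            \<longleftrightarrow> (\<exists>A. shift_compact A \<and> (\<exists>C. \<forall>x\<in>A. \<bar>f x\<bar> \<le> C)))"
  using main[OF assms] .

end
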